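(* Consider a single-hop switched network with $N$ queues and arrival rate vector $\lambda\in\Lambda$. (i) Every fluid model solution for the MW-$\alpha$ policy ($\alpha>0$) satisfies $\mathbf 1\cdot q(t)\le N^{\alpha/(1+\alpha)}\,\mathbf 1\cdot q(0)$ for all $t\ge0$. (ii) If $\lambda$ satisfies the complete loading condition, then every fluid model solution for any scheduling policy satisfies $\mathbf 1\cdot q(t)\ge\mathbf 1\cdot q(0)$ for all $t\ge0$.
   Context: Single-hop network: finite $\mathcal S\subset\mathbb R_+^N$. $\langle\mathcal S\rangle$ convex hull; $\Lambda=\{\lambda\in\mathbb R_+^N:\lambda\le\sigma$ for some $\sigma\in\langle\mathcal S\rangle\}$. $E$ = extreme points of $\{\xi\in\mathbb R_+^N:\max_\pi\xi\cdot\pi\le1\}$, $\mathcal S^*$ its maximal elements, $\Xi(\lambda)=\{\xi\in\mathcal S^*:\xi\cdot\lambda=1\}$. Complete loading condition: $\lambda\in\Lambda$ and $\mathbf 1/\max_{\pi\in\mathcal S}\mathbf 1\cdot\pi$ lies in the convex hull of $\Xi(\lambda)$. Fluid model solution for any scheduling policy with rate $\lambda$: absolutely continuous $q,y:[0,T]\to\mathbb R_+^N$, $s_\pi\ge0$ with $q(t)=q(0)+\lambda t-\sum_\pi s_\pi(t)\pi+y(t)$, $\sum_\pi s_\pi(t)=t$, $y(t)\le\sum_\pi s_\pi(t)\pi$, $s_\pi,y_n$ nondecreasing, and a.e. $\dot y_n(t)=0$ if $q_n(t)>0$. A fluid model solution for MW-$\alpha$ additionally satisfies a.e. $\dot s_\pi(t)=0$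 whenever $\pi\cdot q(t)^\alpha<\max_{\rho\in\mathcal S}\rho\cdot q(t)^\alpha$ (power taken componentwise). *)

theory Defs
  imports "HOL-Analysis.Analysis"
begin

text \<open>Vectors in R^N are modelled as real^'n with a finite index type 'n (N = CARD('n)).
  The order on real^'n is componentwise.\<close>

definition abs_cont_on :: "real set \<Rightarrow> (real \<Rightarrow> 'a::real_normed_vector) \<Rightarrow> bool" where
  "abs_cont_on I f \<longleftrightarrow>
     (\<forall>\<epsilon>>0. \<exists>\<delta>>0. \<forall>(n::nat) (a::nat \<Rightarrow> real) (b::nat \<Rightarrow> real).
        (\<forall>k<n. a k \<in> I \<and> b k \<in> I \<and> a k \<le> b k) \<and>
        (\<forall>j<n. \<forall>k<n. j \<noteq> k \<longrightarrow> b j \<le> a k \<or> b k \<le> a j) \<and>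
        (\<Sum>k<n. b k - a k) < \<delta>
        \<longrightarrow> (\<Sum>k<n. norm (f (b k) - f (a k))) < \<epsilon>)"

definition cap_region :: "(real^'n) set \<Rightarrow> (real^'n) set" where
  "cap_region S = {r. 0 \<le> r \<and> (\<exists>\<sigma>\<in>convex hull S. r \<le> \<sigma>)}"

definition dual_region :: "(real^'n) set \<Rightarrow> (real^'n) set" where
  "dual_region S = {\<xi>. 0 \<le> \<xi> \<and> Max ((\<lambda>\<pi>. \<xi> \<bullet> \<pi>) ` S) \<le> 1}"

definition Ext :: "(real^'n) set \<Rightarrow> (real^'n) set" where
  "Ext S = {\<xi>. \<xi> extreme_point_of dual_region S}"

definition S_star :: "(real^'n) set \<Rightarrow> (real^'n) set" where
  "S_star S = {\<xi> \<in> Ext S. \<not> (\<exists>\<xi>'\<in>Ext S. \<xi> \<le> \<xi>' \<and> \<xi>' \<noteq> \<xi>)}"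

definition Xi :: "(real^'n) set \<Rightarrow> real^'n \<Rightarrow> (real^'n) set" where
  "Xi S lam = {\<xi> \<in> S_star S. \<xi> \<bullet> lam = 1}"

definition complete_loading :: "(real^'n) set \<Rightarrow> real^'n \<Rightarrow> bool" where
  "complete_loading S lam \<longleftrightarrow>
     lam \<in> cap_region S \<and>
     (1 / Max ((\<lambda>\<pi>. 1 \<bullet> \<pi>) ` S)) *\<^sub>R (1::real^'n) \<in> convex hull (Xi S lam)"

text \<open>Fluid model solution on [0,T] for an arbitrary scheduling policy.
  s \<pi> is the cumulative time spent in schedule \<pi>.\<close>
definition fluid_solution ::
  "(real^'n) set \<Rightarrow> real^'n \<Rightarrow> real \<Rightarrow> (real \<Rightarrow> real^'n) \<Rightarrow> (real \<Rightarrow> real^'n)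
     \<Rightarrow> (real^'n \<Rightarrow> real \<Rightarrow> real) \<Rightarrow> bool" where
  "fluid_solution S lam T q y s \<longleftrightarrow>
     abs_cont_on {0..T} q \<and> abs_cont_on {0..T} y \<and>
     (\<forall>t\<in>{0..T}. 0 \<le> q t \<and> 0 \<le> y t) \<and>
     (\<forall>\<pi>\<in>S. \<forall>t\<in>{0..T}. 0 \<le> s \<pi> t) \<and>
     (\<forall>t\<in>{0..T}. q t = q 0 + t *\<^sub>R lam - (\<Sum>\<pi>\<in>S. s \<pi> t *\<^sub>R \<pi>) + y t) \<and>
     (\<forall>t\<in>{0..T}. (\<Sum>\<pi>\<in>S. s \<pi> t) = t) \<and>
     (\<forall>t\<in>{0..T}. y t \<le> (\<Sum>\<pi>\<in>S. s \<pi> t *\<^sub>R \<pi>)) \<and>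
     (\<forall>\<pi>\<in>S. mono_on {0..T} (s \<pi>)) \<and>
     (\<forall>i. mono_on {0..T} (\<lambda>t. y t $ i)) \<and>
     (AE t in lebesgue_on {0..T}. \<forall>i. 0 < q t $ i \<longrightarrow>
         ((\<lambda>u. y u $ i) has_real_derivative 0) (at t within {0..T}))"

definition vpowr :: "real^'n \<Rightarrow> real \<Rightarrow> real^'n" where
  "vpowr x a = (\<chi> i. x $ i powr a)"

definition MW_fluid_solution ::
  "real \<Rightarrow> (real^'n) set \<Rightarrow> real^'n \<Rightarrow> real \<Rightarrow> (real \<Rightarrow> real^'n) \<Rightarrow> (real \<Rightarrow> real^'n)
     \<Rightarrow> (real^'n \<Rightarrow> real \<Rightarrow> real) \<Rightarrow> bool" where
  "MW_fluid_solution \<alpha> S lam T q y s \<longleftrightarrow>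
     fluid_solution S lam T q y s \<and>
     (AE t in lebesgue_on {0..T}. \<forall>\<pi>\<in>S.
        \<pi> \<bullet> vpowr (q t) \<alpha> < Max ((\<lambda>\<rho>. \<rho> \<bullet> vpowr (q t) \<alpha>) ` S) \<longrightarrow>
        (s \<pi> has_real_derivative 0) (at t within {0..T}))"

end

theory Submission
  imports Defs
begin


lemma abs_cont_subset:
  assumes "abs_cont_on I f" "J \<subseteq> I" shows "abs_cont_on J f"
  unfolding abs_cont_on_def
proof (intro allI impI)
  fix \<epsilon> :: real assume "\<epsilon> > 0"
  then obtain \<delta> where "\<delta>>0" and d: "\<forall>(n::nat) (a::nat \<Rightarrow> real) (b::nat \<Rightarrow> real).
        (\<forall>k<n. a k \<in> I \<and> b k \<in> I \<and> a k \<le> b k) \<and>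
        (\<forall>j<n. \<forall>k<n. j \<noteq> k \<longrightarrow> b j \<le> a k \<or> b k \<le> a j) \<and>
        (\<Sum>k<n. b k - a k) < \<delta>
        \<longrightarrow> (\<Sum>k<n. norm (f (b k) - f (a k))) < \<epsilon>"
    using assms unfolding abs_cont_on_def by blast
  show "\<exists>\<delta>>0. \<forall>(n::nat) (a::nat \<Rightarrow> real) (b::nat \<Rightarrow> real).
        (\<forall>k<n. a k \<in> J \<and> b k \<in> J \<and> a k \<le> b k) \<and>
        (\<forall>j<n. \<forall>k<n. j \<noteq> k \<longrightarrow> b j \<le> a k \<or> b k \<le> a j) \<and>
        (\<Sum>k<n. b k - a k) < \<delta>
        \<longrightarrow> (\<Sum>k<n. norm (f (b k) - f (a k))) < \<epsilon>"
  proof (intro exI[of _ \<delta>] conjI allI impI)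
    fix n :: nat and a b :: "nat \<Rightarrow> real" assume h: "(\<forall>k<n. a k \<in> J \<and> b k \<in> J \<and> a k \<le> b k) \<and>
        (\<forall>j<n. \<forall>k<n. j \<noteq> k \<longrightarrow> b j \<le> a k \<or> b k \<le> a j) \<and>
        (\<Sum>k<n. b k - a k) < \<delta>"
    have "(\<forall>k<n. a k \<in> I \<and> b k \<in> I \<and> a k \<le> b k)" using h assms(2) by blast
    then show "(\<Sum>k<n. norm (f (b k) - f (a k))) < \<epsilon>" using h by (intro d[rule_format] conjI) auto
  qed (use \<open>\<delta>>0\<close> in auto)
qed

lemma abs_cont_component:
  fixes f :: "real \<Rightarrow> real^'n"
  assumes "abs_cont_on I f" shows "abs_cont_on I (\<lambda>t. f t $ i)"
  unfolding abs_cont_on_def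
proof (intro allI impI)
  fix \<epsilon> :: real assume "\<epsilon> > 0"
  then obtain \<delta> where "\<delta>>0" and d: "\<forall>(n::nat) (a::nat \<Rightarrow> real) (b::nat \<Rightarrow> real).
        (\<forall>k<n. a k \<in> I \<and> b k \<in> I \<and> a k \<le> b k) \<and>
        (\<forall>j<n. \<forall>k<n. j \<noteq> k \<longrightarrow> b j \<le> a k \<or> b k \<le> a j) \<and>
        (\<Sum>k<n. b k - a k) < \<delta>
        \<longrightarrow> (\<Sum>k<n. norm (f (b k) - f (a k))) < \<epsilon>"
    using assms unfolding abs_cont_on_def by blast
  show "\<exists>\<delta>>0. \<forall>(n::nat) (a::nat \<Rightarrow> real) (b::nat \<Rightarrow> real).
        (\<forall>k<n. a k \<in> I \<and> b k \<in> I \<and> a k \<le> b k) \<and>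
        (\<forall>j<n. \<forall>k<n. j \<noteq> k \<longrightarrow> b j \<le> a k \<or> b k \<le> a j) \<and>
        (\<Sum>k<n. b k - a k) < \<delta>
        \<longrightarrow> (\<Sum>k<n. norm (f (b k) $ i - f (a k) $ i)) < \<epsilon>"
  proof (intro exI[of _ \<delta>] conjI allI impI)
    fix n :: nat and a b :: "nat \<Rightarrow> real" assume h: "(\<forall>k<n. a k \<in> I \<and> b k \<in> I \<and> a k \<le> b k) \<and>
        (\<forall>j<n. \<forall>k<n. j \<noteq> k \<longrightarrow> b j \<le> a k \<or> b k \<le> a j) \<and>
        (\<Sum>k<n. b k - a k) < \<delta>"
    have "(\<Sum>k<n. norm (f (b k) $ i - f (a k) $ i)) \<le> (\<Sum>k<n. norm (f (b k) - f (a k)))"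
      by (intro sum_mono) (metis component_le_norm_cart real_norm_def vector_minus_component)
    also have "\<dots> < \<epsilon>" using h by (intro d[rule_format] conjI) auto
    finally show "(\<Sum>k<n. norm (f (b k) $ i - f (a k) $ i)) < \<epsilon>" .
  qed (use \<open>\<delta>>0\<close> in auto)
qed

lemma lipschitz_abs_cont:
  fixes f :: "real \<Rightarrow> 'a::real_normed_vector"
  assumes L: "\<And>u v. u \<in> I \<Longrightarrow> v \<in> I \<Longrightarrow> norm (f v - f u) \<le> L * \<bar>v - u\<bar>"
  shows "abs_cont_on I f"
  unfolding abs_cont_on_def
proof (intro allI impI)
  fix \<epsilon> :: real assume "\<epsilon> > 0"
  show "\<exists>\<delta>>0. \<forall>(n::nat) (a::nat \<Rightarrow> real) (b::nat \<Rightarrow> real).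
        (\<forall>k<n. a k \<in> I \<and> b k \<in> I \<and> a k \<le> b k) \<and>
        (\<forall>j<n. \<forall>k<n. j \<noteq> k \<longrightarrow> b j \<le> a k \<or> b k \<le> a j) \<and>
        (\<Sum>k<n. b k - a k) < \<delta>
        \<longrightarrow> (\<Sum>k<n. norm (f (b k) - f (a k))) < \<epsilon>"
  proof (intro exI[of _ "\<epsilon> / (\<bar>L\<bar> + 1)"] conjI allI impI)
    show "\<epsilon> / (\<bar>L\<bar> + 1) > 0" using \<open>\<epsilon>>0\<close> by simp
    fix n :: nat and a b :: "nat \<Rightarrow> real" assume h: "(\<forall>k<n. a k \<in> I \<and> b k \<in> I \<and> a k \<le> b k) \<and>
        (\<forall>j<n. \<forall>k<n. j \<noteq> k \<longrightarrow> b j \<le> a k \<or> b k \<le> a j) \<and>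
        (\<Sum>k<n. b k - a k) < \<epsilon> / (\<bar>L\<bar> + 1)"
    have "(\<Sum>k<n. norm (f (b k) - f (a k))) \<le> (\<Sum>k<n. \<bar>L\<bar> * (b k - a k))"
    proof (intro sum_mono)
      fix k assume "k \<in> {..<n}"
      then have "a k \<in> I" "b k \<in> I" "a k \<le> b k" using h by auto
      then have "norm (f (b k) - f (a k)) \<le> L * \<bar>b k - a k\<bar>" using L by blast
      also have "\<dots> \<le> \<bar>L\<bar> * (b k - a k)" using \<open>a k \<le> b k\<close>
        by (simp add: mult_right_mono)
      finally show "norm (f (b k) - f (a k)) \<le> \<bar>L\<bar> * (b k - a k)" .
    qed
    also have "\<dots> = \<bar>L\<bar> * (\<Sum>k<n. b k - a k)" by (simp add: sum_distrib_left)
    also have "\<dots> \<le> \<bar>L\<bar> * (\<epsilon> / (\<bar>L\<bar> + 1))"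
      using h by (intro mult_left_mono) auto
    also have "\<dots> < \<epsilon>" using \<open>\<epsilon>>0\<close> by (simp add: field_simps)
    finally show "(\<Sum>k<n. norm (f (b k) - f (a k))) < \<epsilon>" .
  qed
qed

lemma abs_cont_imp_continuous_on:
  fixes f :: "real \<Rightarrow> 'a::real_normed_vector"
  assumes "abs_cont_on I f" shows "continuous_on I f"
  unfolding continuous_on_iff
proof (intro ballI allI impI)
  fix x e assume "x \<in> I" "(e::real) > 0"
  then obtain \<delta> where "\<delta>>0" and d: "\<forall>(n::nat) (a::nat \<Rightarrow> real) (b::nat \<Rightarrow> real).
        (\<forall>k<n. a k \<in> I \<and> b k \<in> I \<and> a k \<le> b k) \<and>
        (\<forall>j<n. \<forall>k<n. j \<noteq> k \<longrightarrow> b j \<le> a k \<or> b k \<le> a j) \<and>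
        (\<Sum>k<n. b k - a k) < \<delta>
        \<longrightarrow> (\<Sum>k<n. norm (f (b k) - f (a k))) < e"
    using assms unfolding abs_cont_on_def by blast
  show "\<exists>d>0. \<forall>x'\<in>I. dist x' x < d \<longrightarrow> dist (f x') (f x) < e"
  proof (intro exI[of _ \<delta>] conjI ballI impI)
    fix x' assume "x' \<in> I" "dist x' x < \<delta>"
    have "(\<Sum>k<Suc 0. norm (f ((\<lambda>_. max x x') k) - f ((\<lambda>_. min x x') k))) < e"
      using d[rule_format, of "Suc 0" "\<lambda>_. min x x'" "\<lambda>_. max x x'"] \<open>x \<in> I\<close> \<open>x' \<in> I\<close>
        \<open>dist x' x < \<delta>\<close> by (auto simp: dist_real_def min_def max_def split: if_splits)
    then show "dist (f x') (f x) < e"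
      by (auto simp: dist_norm min_def max_def norm_minus_commute split: if_splits)
  qed (use \<open>\<delta>>0\<close> in auto)
qed

lemma abs_cont_finite:
  fixes f :: "real \<Rightarrow> 'a::real_normed_vector"
  assumes "abs_cont_on I f" "\<epsilon>>0"
  obtains \<delta> where "\<delta>>0" "\<And>D. finite D \<Longrightarrow> (\<forall>p\<in>D. fst p \<in> I \<and> snd p \<in> I \<and> fst p \<le> snd p) \<Longrightarrow>
      (\<forall>p\<in>D. \<forall>p'\<in>D. p \<noteq> p' \<longrightarrow> snd p \<le> fst p' \<or> snd p' \<le> fst p) \<Longrightarrow>
      (\<Sum>p\<in>D. snd p - fst p) < \<delta> \<Longrightarrow> (\<Sum>p\<in>D. norm (f (snd p) - f (fst p))) < \<epsilon>"
proof -
  obtain \<delta> where "\<delta>>0" and d: "\<forall>(n::nat) (a::nat \<Rightarrow> real) (b::nat \<Rightarrow> real).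
        (\<forall>k<n. a k \<in> I \<and> b k \<in> I \<and> a k \<le> b k) \<and>
        (\<forall>j<n. \<forall>k<n. j \<noteq> k \<longrightarrow> b j \<le> a k \<or> b k \<le> a j) \<and>
        (\<Sum>k<n. b k - a k) < \<delta>
        \<longrightarrow> (\<Sum>k<n. norm (f (b k) - f (a k))) < \<epsilon>"
    using assms unfolding abs_cont_on_def by blast
  show ?thesis
  proof (rule that[OF \<open>\<delta>>0\<close>])
    fix D :: "(real \<times> real) set"
    assume fin: "finite D" and D1: "\<forall>p\<in>D. fst p \<in> I \<and> snd p \<in> I \<and> fst p \<le> snd p"
      and D2: "\<forall>p\<in>D. \<forall>p'\<in>D. p \<noteq> p' \<longrightarrow> snd p \<le> fst p' \<or> snd p' \<le> fst p"
      and D3: "(\<Sum>p\<in>D. snd p - fst p) < \<delta>"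
    obtain n :: nat and h where Dh: "D = h ` {i. i < n}" and inj: "inj_on h {i. i < n}"
      using finite_imp_nat_seg_image_inj_on[OF fin] by metis
    have eq: "{i. i < n} = {..<n}" by auto
    have s1: "(\<Sum>p\<in>D. snd p - fst p) = (\<Sum>k<n. snd (h k) - fst (h k))"
      unfolding Dh using inj by (simp add: sum.reindex eq)
    have s2: "(\<Sum>p\<in>D. norm (f (snd p) - f (fst p))) = (\<Sum>k<n. norm (f (snd (h k)) - f (fst (h k))))"
      unfolding Dh using inj by (simp add: sum.reindex eq)
    have "(\<Sum>k<n. norm (f (snd (h k)) - f (fst (h k)))) < \<epsilon>"
    proof (rule d[rule_format], intro conjI allI impI)
      fix k assume "k < n"
      then have "h k \<in> D" using Dh by auto
      then show "fst (h k) \<in> I" "snd (h k) \<in> I" "fst (h k) \<le> snd (h k)" using D1 by auto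
    next
      fix j k assume "j < n" "k < n" "j \<noteq> k"
      then have "h j \<noteq> h k" "h j \<in> D" "h k \<in> D" using inj Dh by (auto simp: inj_on_def)
      then show "snd (h j) \<le> fst (h k) \<or> snd (h k) \<le> fst (h j)" using D2 by blast
    next
      show "(\<Sum>k<n. snd (h k) - fst (h k)) < \<delta>" using D3 s1 by simp
    qed
    then show "(\<Sum>p\<in>D. norm (f (snd p) - f (fst p))) < \<epsilon>" using s2 by simp
  qed
qed



abbreviation hkc :: "real set \<Rightarrow> real" where "hkc \<equiv> Henstock_Kurzweil_Integration.content"

definition small_at :: "real set \<Rightarrow> real \<Rightarrow> (real \<Rightarrow> real \<Rightarrow> real) \<Rightarrow> bool" where
 "small_at I t h \<longleftrightarrow> (\<forall>\<epsilon>>0. \<exists>d>0. \<forall>u v. u \<in> I \<longrightarrow> v \<in> I \<longrightarrow> u \<le> t \<longrightarrow> t \<le> v \<longrightarrow> v - u < d \<longrightarrow> h u v \<le> \<epsilon> * (v - u))"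

lemma tag_props:
  assumes "p tagged_division_of {a..b::real}" "(x,K) \<in> p"
  shows "K = {Inf K..Sup K}" "Inf K \<le> x" "x \<le> Sup K" "a \<le> Inf K" "Sup K \<le> b"
    "hkc K = Sup K - Inf K"
proof -
  obtain u v where K: "K = cbox u v" using tagged_division_ofD(4)[OF assms] by blast
  then have K': "K = {u..v}" by simp
  have "x \<in> K" using tagged_division_ofD(2)[OF assms] .
  then have uv: "u \<le> x" "x \<le> v" using K' by simp_all
  have sub: "K \<subseteq> {a..b}" using tagged_division_ofD(3)[OF assms] .
  have uv2: "u \<le> v" using uv by linarith
  have iu: "Inf K = u" "Sup K = v" unfolding K' using uv2 by simp_all
  show "K = {Inf K..Sup K}" "Inf K \<le> x" "x \<le> Sup K" using K' uv iu by simp_all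
  show "hkc K = Sup K - Inf K" unfolding iu K' using uv2 by simp
  have "u \<in> K" "v \<in> K" using K' uv2 by simp_all
  then have "a \<le> u" "v \<le> b" using sub by (meson atLeastAtMost_iff subsetD)+
  then show "a \<le> Inf K" "Sup K \<le> b" using iu by simp_all
qed

lemma main_mono:
  fixes g :: "real \<Rightarrow> real"
  assumes ab: "a \<le> b" and ac: "abs_cont_on {a..b} g" and negE: "negligible E"
    and good: "\<And>t. t \<in> {a..b} \<Longrightarrow> t \<notin> E \<Longrightarrow> small_at {a..b} t (\<lambda>u v. g v - g u)"
  shows "g b \<le> g a"
proof -
  have key: "g b - g a \<le> \<epsilon> * (b - a) + \<epsilon>" if "\<epsilon> > 0" for \<epsilon>
  proof -
    obtain \<delta> where "\<delta> > 0" and \<delta>: "\<And>D. finite D \<Longrightarrow> (\<forall>p\<in>D. fst p \<in> {a..b} \<and> snd p \<in> {a..b} \<and> fst p \<le> snd p) \<Longrightarrow>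
      (\<forall>p\<in>D. \<forall>p'\<in>D. p \<noteq> p' \<longrightarrow> snd p \<le> fst p' \<or> snd p' \<le> fst p) \<Longrightarrow>
      (\<Sum>p\<in>D. snd p - fst p) < \<delta> \<Longrightarrow> (\<Sum>p\<in>D. norm (g (snd p) - g (fst p))) < \<epsilon>"
      by (rule abs_cont_finite[OF ac \<open>\<epsilon>>0\<close>]) (rule that, assumption+)
    have "((indicator E :: real \<Rightarrow> real) has_integral 0) {a..b}"
      using negE unfolding negligible_def by (metis cbox_interval)
    then have h: "\<forall>e>0. \<exists>\<gamma>. gauge \<gamma> \<and> (\<forall>p. p tagged_division_of {a..b} \<and> \<gamma> fine p \<longrightarrow>
        \<bar>\<Sum>(x, k)\<in>p. hkc k * indicator E x\<bar> < e)"
      by (simp add: has_integral_real)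
    obtain \<gamma>1 where g1: "gauge \<gamma>1" and g1p': "\<forall>p. p tagged_division_of {a..b} \<and> \<gamma>1 fine p \<longrightarrow>
        \<bar>\<Sum>(x, k)\<in>p. hkc k * indicator E x\<bar> < \<delta>"
      using h[rule_format, OF \<open>\<delta>>0\<close>] by blast
    have g1p: "\<bar>\<Sum>(x, k)\<in>p. hkc k * indicator E x\<bar> < \<delta>" if "p tagged_division_of {a..b}" "\<gamma>1 fine p" for p
      using g1p' that by blast
    have "\<forall>t\<in>{a..b} - E. \<exists>dd>0. \<forall>u v. u \<in> {a..b} \<longrightarrow> v \<in> {a..b} \<longrightarrow> u \<le> t \<longrightarrow> t \<le> v \<longrightarrow> v - u < dd \<longrightarrow> g v - g u \<le> \<epsilon> * (v - u)"
    proof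
      fix t assume "t \<in> {a..b} - E"
      then have "small_at {a..b} t (\<lambda>u v. g v - g u)" using good by blast
      then show "\<exists>dd>0. \<forall>u v. u \<in> {a..b} \<longrightarrow> v \<in> {a..b} \<longrightarrow> u \<le> t \<longrightarrow> t \<le> v \<longrightarrow> v - u < dd \<longrightarrow> g v - g u \<le> \<epsilon> * (v - u)"
        unfolding small_at_def using \<open>\<epsilon>>0\<close> by blast
    qed
    from bchoice[OF this] obtain d where d: "\<forall>t\<in>{a..b} - E. d t > 0 \<and> (\<forall>u v. u \<in> {a..b} \<longrightarrow> v \<in> {a..b} \<longrightarrow> u \<le> t \<longrightarrow> t \<le> v \<longrightarrow> v - u < d t \<longrightarrow> g v - g u \<le> \<epsilon> * (v - u))"
      by blast
    define \<gamma>2 where "\<gamma>2 t = (if t \<in> {a..b} - E then ball t (d t / 2) else UNIV)" for t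
    have g2: "gauge \<gamma>2" unfolding gauge_def
    proof
      fix t show "t \<in> \<gamma>2 t \<and> open (\<gamma>2 t)"
      proof (cases "t \<in> {a..b} - E")
        case True then have "d t > 0" using d by blast
        then show ?thesis using True unfolding \<gamma>2_def by simp
      next
        case False then show ?thesis unfolding \<gamma>2_def if_not_P[OF False] by simp
      qed
    qed
    obtain p where p: "p tagged_division_of {a..b}" and pf: "(\<lambda>x. \<gamma>1 x \<inter> \<gamma>2 x) fine p"
      using fine_division_exists_real[OF gauge_Int[OF g1 g2]] by blast
    have pf1: "\<gamma>1 fine p" and pf2: "\<gamma>2 fine p" using pf by (auto simp: fine_Int)
    have finp: "finite p" using tagged_division_ofD(1)[OF p] .
    define trm where "trm = (\<lambda>(x::real,K::real set). g (Sup K) - g (Inf K))"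
    have total: "(\<Sum>xK\<in>p. trm xK) = g b - g a"
      unfolding trm_def using additive_tagged_division_1[OF ab p, of g] by simp
    define pb where "pb = {xK \<in> p. fst xK \<in> E}"
    define pg where "pg = {xK \<in> p. fst xK \<notin> E}"
    have split: "(\<Sum>xK\<in>p. trm xK) = (\<Sum>xK\<in>pg. trm xK) + (\<Sum>xK\<in>pb. trm xK)"
    proof -
      have "p = pg \<union> pb" "pg \<inter> pb = {}" unfolding pg_def pb_def by auto
      then show ?thesis using finp by (simp add: sum.union_disjoint)
    qed
    have content_nonneg: "hkc K \<ge> 0" for K :: "real set" by simp
    have sg: "(\<Sum>xK\<in>pg. trm xK) \<le> \<epsilon> * (b - a)"
    proof -
      have "(\<Sum>xK\<in>pg. trm xK) \<le> (\<Sum>xK\<in>pg. \<epsilon> * hkc (snd xK))"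
      proof (intro sum_mono)
        fix xK assume xK: "xK \<in> pg"
        obtain x K where xKe: "xK = (x,K)" by fastforce
        have inp: "(x,K) \<in> p" and xE: "x \<notin> E" using xK xKe pg_def by auto
        note tp = tag_props[OF p inp]
        have xab: "x \<in> {a..b}" using tp by auto
        have "K \<subseteq> \<gamma>2 x" using pf2 inp unfolding fine_def by blast
        then have "K \<subseteq> ball x (d x / 2)" using xab xE unfolding \<gamma>2_def by auto
        moreover have "Inf K \<in> K" "Sup K \<in> K" using tp by (metis atLeastAtMost_iff order.trans order_refl)+
        ultimately have "dist x (Inf K) < d x / 2" "dist x (Sup K) < d x / 2" by auto
        then have "Sup K - Inf K < d x" unfolding dist_real_def by linarith
        then have "g (Sup K) - g (Inf K) \<le> \<epsilon> * (Sup K - Inf K)"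
          using d[rule_format, of x] xab xE tp by auto
        then show "trm xK \<le> \<epsilon> * hkc (snd xK)" using xKe tp trm_def by simp
      qed
      also have "\<dots> = \<epsilon> * (\<Sum>xK\<in>pg. hkc (snd xK))" by (simp add: sum_distrib_left)
      also have "\<dots> \<le> \<epsilon> * (\<Sum>xK\<in>p. hkc (snd xK))"
        using \<open>\<epsilon>>0\<close> finp by (intro mult_left_mono sum_mono2) (auto simp: pg_def)
      also have "(\<Sum>xK\<in>p. hkc (snd xK)) = b - a"
        using additive_content_tagged_division[OF p[unfolded cbox_interval[symmetric]]] ab
        by (simp add: split_def)
      finally show ?thesis .
    qed
    have pbsmall: "(\<Sum>xK\<in>pb. hkc (snd xK)) < \<delta>"
    proof -
      have "(\<Sum>(x, k)\<in>p. hkc k * indicator E x) = (\<Sum>xK\<in>p. if fst xK \<in> E then hkc (snd xK) else 0)"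
        by (intro sum.cong) (auto simp: indicator_def)
      also have "\<dots> = (\<Sum>xK\<in>pb. hkc (snd xK))"
        unfolding pb_def using finp by (simp add: sum.inter_filter)
      finally have "\<bar>\<Sum>(x, k)\<in>p. hkc k * indicator E x\<bar> = \<bar>\<Sum>xK\<in>pb. hkc (snd xK)\<bar>" by simp
      then show ?thesis using g1p[OF p pf1] by simp
    qed
    define pb' where "pb' = {xK \<in> pb. hkc (snd xK) > 0}"
    have finpb: "finite pb" "finite pb'" using finp unfolding pb_def pb'_def by auto
    have sb1: "(\<Sum>xK\<in>pb. trm xK) = (\<Sum>xK\<in>pb'. trm xK)"
    proof (rule sum.mono_neutral_right[OF finpb(1)])
      show "pb' \<subseteq> pb" unfolding pb'_def by auto
      show "\<forall>i\<in>pb - pb'. trm i = 0"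
      proof
        fix xK assume "xK \<in> pb - pb'"
        moreover obtain x K where xKe: "xK = (x,K)" by (cases xK)
        ultimately have inp: "(x,K) \<in> p" and c: "\<not> hkc K > 0"
          unfolding pb_def pb'_def by auto
        note tp = tag_props[OF p inp]
        then have "Sup K = Inf K" using c by auto
        then show "trm xK = 0" using xKe trm_def by simp
      qed
    qed
    define D where "D = (\<lambda>xK. (Inf (snd xK), Sup (snd xK))) ` pb'"
    have pb'p: "pb' \<subseteq> p" unfolding pb'_def pb_def by auto
    have disj: "Sup (snd xK1) \<le> Inf (snd xK2) \<or> Sup (snd xK2) \<le> Inf (snd xK1)"
      if "xK1 \<in> pb'" "xK2 \<in> pb'" "xK1 \<noteq> xK2" for xK1 xK2
    proof -
      obtain x1 K1 x2 K2 where e: "xK1 = (x1,K1)" "xK2 = (x2,K2)" by fastforce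
      have in1: "(x1,K1) \<in> p" and in2: "(x2,K2) \<in> p" using that e pb'p by auto
      have c1: "hkc K1 > 0" "hkc K2 > 0" using that e unfolding pb'_def by auto
      note t1 = tag_props[OF p in1] and t2 = tag_props[OF p in2]
      have "interior K1 \<inter> interior K2 = {}"
        using tagged_division_ofD(5)[OF p in1 in2] that e by auto
      then have "{Inf K1<..<Sup K1} \<inter> {Inf K2<..<Sup K2} = {}"
        using t1(1) t2(1) by (metis interior_atLeastAtMost_real)
      then show ?thesis using c1 t1 t2 e
        by (auto simp: disjoint_iff)
    qed
    have inj: "inj_on (\<lambda>xK. (Inf (snd xK), Sup (snd xK))) pb'"
    proof (rule inj_onI)
      fix xK1 xK2 assume h: "xK1 \<in> pb'" "xK2 \<in> pb'" "(Inf (snd xK1), Sup (snd xK1)) = (Inf (snd xK2), Sup (snd xK2))"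
      show "xK1 = xK2"
      proof (rule ccontr)
        assume "xK1 \<noteq> xK2"
        from disj[OF h(1,2) this] h(3) have "Sup (snd xK1) \<le> Inf (snd xK1)" by auto
        moreover obtain x1 K1 where e: "xK1 = (x1,K1)" by fastforce
        moreover have "(x1,K1) \<in> p" "hkc K1 > 0" using h(1) e pb'p unfolding pb'_def by auto
        ultimately show False using tag_props[OF p, of x1 K1] by auto
      qed
    qed
    have sb2: "(\<Sum>xK\<in>pb'. trm xK) = (\<Sum>q\<in>D. g (snd q) - g (fst q))"
      unfolding D_def using inj by (simp add: sum.reindex trm_def split_def)
    have "(\<Sum>q\<in>D. norm (g (snd q) - g (fst q))) < \<epsilon>"
    proof (rule \<delta>)
      show "finite D" unfolding D_def using finpb by simp
      show "\<forall>q\<in>D. fst q \<in> {a..b} \<and> snd q \<in> {a..b} \<and> fst q \<le> snd q"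
      proof
        fix q assume "q \<in> D"
        then obtain x K where "(x,K) \<in> pb'" "q = (Inf K, Sup K)" unfolding D_def by auto
        then have "(x,K) \<in> p" using pb'p by auto
        from tag_props[OF p this] show "fst q \<in> {a..b} \<and> snd q \<in> {a..b} \<and> fst q \<le> snd q"
          using \<open>q = (Inf K, Sup K)\<close> by auto
      qed
      show "\<forall>q\<in>D. \<forall>q'\<in>D. q \<noteq> q' \<longrightarrow> snd q \<le> fst q' \<or> snd q' \<le> fst q"
        unfolding D_def using disj by fastforce
      have "(\<Sum>q\<in>D. snd q - fst q) = (\<Sum>xK\<in>pb'. Sup (snd xK) - Inf (snd xK))"
        unfolding D_def using inj by (simp add: sum.reindex)
      also have "\<dots> = (\<Sum>xK\<in>pb'. hkc (snd xK))"
      proof (intro sum.cong refl)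
        fix xK assume "xK \<in> pb'"
        moreover obtain x K where "xK = (x,K)" by (cases xK)
        ultimately have "xK = (x,K)" "(x,K) \<in> p" using pb'p by auto
        then show "Sup (snd xK) - Inf (snd xK) = hkc (snd xK)" using tag_props[OF p] by auto
      qed
      also have "\<dots> \<le> (\<Sum>xK\<in>pb. hkc (snd xK))"
        using finpb by (intro sum_mono2) (auto simp: pb'_def)
      also have "\<dots> < \<delta>" by (rule pbsmall)
      finally show "(\<Sum>q\<in>D. snd q - fst q) < \<delta>" .
    qed
    moreover have "(\<Sum>q\<in>D. g (snd q) - g (fst q)) \<le> (\<Sum>q\<in>D. norm (g (snd q) - g (fst q)))"
      by (intro sum_mono) simp
    ultimately have "(\<Sum>xK\<in>pb. trm xK) < \<epsilon>" using sb1 sb2 by simp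
    then show ?thesis using total split sg by linarith
  qed
  show ?thesis
  proof (rule ccontr)
    assume "\<not> g b \<le> g a"
    define c where "c = b - a + 1"
    have "c > 0" unfolding c_def using ab by simp
    define \<epsilon> where "\<epsilon> = (g b - g a) / (2 * c)"
    have "\<epsilon> > 0" unfolding \<epsilon>_def using \<open>\<not> g b \<le> g a\<close> \<open>c>0\<close> by simp
    have "\<epsilon> * (b - a) + \<epsilon> = \<epsilon> * c" unfolding c_def by (simp add: algebra_simps)
    also have "\<dots> = (g b - g a) / 2" unfolding \<epsilon>_def using \<open>c>0\<close> by (simp add: field_simps)
    finally have eq: "\<epsilon> * (b - a) + \<epsilon> = (g b - g a) / 2" .
    have le: "g b - g a \<le> (g b - g a) / 2" using key[OF \<open>\<epsilon>>0\<close>] unfolding eq .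
    show False using le \<open>\<not> g b \<le> g a\<close> by (simp add: field_simps)
  qed
qed



lemma small_at_add:
  assumes "small_at I t h1" "small_at I t h2"
  shows "small_at I t (\<lambda>u v. h1 u v + h2 u v)"
  unfolding small_at_def
proof (intro allI impI)
  fix \<epsilon> :: real assume "\<epsilon> > 0"
  then have "\<epsilon>/2 > 0" by simp
  obtain d1 where "d1 > 0" and d1: "\<forall>u v. u \<in> I \<longrightarrow> v \<in> I \<longrightarrow> u \<le> t \<longrightarrow> t \<le> v \<longrightarrow> v - u < d1 \<longrightarrow> h1 u v \<le> \<epsilon>/2 * (v - u)"
    using assms(1) \<open>\<epsilon>/2 > 0\<close> unfolding small_at_def by blast
  obtain d2 where "d2 > 0" and d2: "\<forall>u v. u \<in> I \<longrightarrow> v \<in> I \<longrightarrow> u \<le> t \<longrightarrow> t \<le> v \<longrightarrow> v - u < d2 \<longrightarrow> h2 u v \<le> \<epsilon>/2 * (v - u)"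
    using assms(2) \<open>\<epsilon>/2 > 0\<close> unfolding small_at_def by blast
  show "\<exists>d>0. \<forall>u v. u \<in> I \<longrightarrow> v \<in> I \<longrightarrow> u \<le> t \<longrightarrow> t \<le> v \<longrightarrow> v - u < d \<longrightarrow> h1 u v + h2 u v \<le> \<epsilon> * (v - u)"
  proof (intro exI[of _ "min d1 d2"] conjI allI impI)
    fix u v assume h: "u \<in> I" "v \<in> I" "u \<le> t" "t \<le> v" "v - u < min d1 d2"
    have "h1 u v \<le> \<epsilon>/2 * (v - u)" using d1 h by simp
    moreover have "h2 u v \<le> \<epsilon>/2 * (v - u)" using d2 h by simp
    ultimately show "h1 u v + h2 u v \<le> \<epsilon> * (v - u)" by (simp add: field_simps)
  qed (use \<open>d1>0\<close> \<open>d2>0\<close> in simp)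
qed

lemma small_at_scale:
  assumes "c \<ge> 0" "small_at I t h"
  shows "small_at I t (\<lambda>u v. c * h u v)"
  unfolding small_at_def
proof (intro allI impI)
  fix \<epsilon> :: real assume "\<epsilon> > 0"
  then have e: "\<epsilon>/(c+1) > 0" using assms(1) by simp
  obtain d where "d > 0" and d: "\<forall>u v. u \<in> I \<longrightarrow> v \<in> I \<longrightarrow> u \<le> t \<longrightarrow> t \<le> v \<longrightarrow> v - u < d \<longrightarrow> h u v \<le> \<epsilon>/(c+1) * (v - u)"
    using assms(2) e unfolding small_at_def by blast
  show "\<exists>d>0. \<forall>u v. u \<in> I \<longrightarrow> v \<in> I \<longrightarrow> u \<le> t \<longrightarrow> t \<le> v \<longrightarrow> v - u < d \<longrightarrow> c * h u v \<le> \<epsilon> * (v - u)"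
  proof (intro exI[of _ d] conjI allI impI)
    fix u v assume h: "u \<in> I" "v \<in> I" "u \<le> t" "t \<le> v" "v - u < d"
    have "h u v \<le> \<epsilon>/(c+1) * (v - u)" using d h by blast
    then have "c * h u v \<le> c * (\<epsilon>/(c+1) * (v - u))" using assms(1) by (rule mult_left_mono)
    also have "\<dots> = (c/(c+1)) * \<epsilon> * (v - u)" by simp
    also have "\<dots> \<le> 1 * \<epsilon> * (v - u)"
      using assms(1) h \<open>\<epsilon>>0\<close> by (intro mult_right_mono) auto
    finally show "c * h u v \<le> \<epsilon> * (v - u)" by simp
  qed (use \<open>d>0\<close> in simp)
qed

lemma small_at_zero: "small_at I t (\<lambda>u v. 0)"
  unfolding small_at_def by (auto intro!: exI[of _ 1])

lemma small_at_sum: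
  assumes "finite A" "\<And>x. x \<in> A \<Longrightarrow> small_at I t (h x)"
  shows "small_at I t (\<lambda>u v. \<Sum>x\<in>A. h x u v)"
  using assms
proof (induction A rule: finite_induct)
  case empty then show ?case by (simp add: small_at_zero)
next
  case (insert x F)
  then show ?case by (simp add: small_at_add)
qed

lemma small_at_mono:
  assumes "small_at I t h'" "\<And>u v. u \<in> I \<Longrightarrow> v \<in> I \<Longrightarrow> u \<le> t \<Longrightarrow> t \<le> v \<Longrightarrow> h u v \<le> h' u v"
  shows "small_at I t h"
  unfolding small_at_def
proof (intro allI impI)
  fix \<epsilon> :: real assume "\<epsilon> > 0"
  then obtain d where "d > 0" and d: "\<forall>u v. u \<in> I \<longrightarrow> v \<in> I \<longrightarrow> u \<le> t \<longrightarrow> t \<le> v \<longrightarrow> v - u < d \<longrightarrow> h' u v \<le> \<epsilon> * (v - u)"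
    using assms(1) unfolding small_at_def by blast
  show "\<exists>d>0. \<forall>u v. u \<in> I \<longrightarrow> v \<in> I \<longrightarrow> u \<le> t \<longrightarrow> t \<le> v \<longrightarrow> v - u < d \<longrightarrow> h u v \<le> \<epsilon> * (v - u)"
    using d assms(2) \<open>d>0\<close> by (meson order_trans)
qed

lemma small_at_subset:
  assumes "small_at I t h" "J \<subseteq> I"
  shows "small_at J t h"
  using assms unfolding small_at_def by (meson subsetD)

lemma small_at_deriv0:
  assumes "(f has_real_derivative 0) (at t within I)"
  shows "small_at I t (\<lambda>u v. \<bar>f v - f u\<bar>)"
  unfolding small_at_def
proof (intro allI impI)
  fix \<epsilon> :: real assume "\<epsilon> > 0"
  have lim: "((\<lambda>y. (f y - f t) / (y - t)) \<longlongrightarrow> 0) (at t within I)"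
    using assms by (simp add: has_field_derivative_iff)
  then have "eventually (\<lambda>y. dist ((f y - f t) / (y - t)) 0 < \<epsilon>) (at t within I)"
    using \<open>\<epsilon>>0\<close> tendstoD by blast
  then obtain d where "d > 0" and d: "\<And>y. y \<in> I \<Longrightarrow> y \<noteq> t \<Longrightarrow> dist y t < d \<Longrightarrow> dist ((f y - f t) / (y - t)) 0 < \<epsilon>"
    unfolding eventually_at by blast
  have bnd: "\<bar>f y - f t\<bar> \<le> \<epsilon> * \<bar>y - t\<bar>" if "y \<in> I" "\<bar>y - t\<bar> < d" for y
  proof (cases "y = t")
    case True then show ?thesis by simp
  next
    case False
    then have "\<bar>(f y - f t) / (y - t)\<bar> < \<epsilon>" using d[OF that(1) False] that(2) by (simp add: dist_real_def)
    then have "\<bar>f y - f t\<bar> / \<bar>y - t\<bar> < \<epsilon>" by (simp add: abs_divide)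
    then show ?thesis using False by (simp add: divide_less_eq less_imp_le)
  qed
  show "\<exists>d>0. \<forall>u v. u \<in> I \<longrightarrow> v \<in> I \<longrightarrow> u \<le> t \<longrightarrow> t \<le> v \<longrightarrow> v - u < d \<longrightarrow> \<bar>f v - f u\<bar> \<le> \<epsilon> * (v - u)"
  proof (intro exI[of _ d] conjI allI impI)
    fix u v assume h: "u \<in> I" "v \<in> I" "u \<le> t" "t \<le> v" "v - u < d"
    have dv: "\<bar>v - t\<bar> < d" and du: "\<bar>u - t\<bar> < d" using h by auto
    have "\<bar>f v - f t\<bar> \<le> \<epsilon> * \<bar>v - t\<bar>" by (rule bnd[OF h(2) dv])
    moreover have "\<bar>f u - f t\<bar> \<le> \<epsilon> * \<bar>u - t\<bar>" by (rule bnd[OF h(1) du])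
    moreover
    moreover have "\<bar>v - t\<bar> = v - t" "\<bar>u - t\<bar> = t - u" using h by auto
    ultimately have "\<bar>f v - f t\<bar> + \<bar>f u - f t\<bar> \<le> \<epsilon> * (v - t) + \<epsilon> * (t - u)" by simp
    then show "\<bar>f v - f u\<bar> \<le> \<epsilon> * (v - u)" by (simp add: algebra_simps abs_diff_le_iff)
  qed (use \<open>d>0\<close> in simp)
qed

lemma small_at_vanish:
  assumes "\<And>\<epsilon>. \<epsilon> > 0 \<Longrightarrow> \<exists>d>0. \<forall>v\<in>I. \<bar>v - t\<bar> < d \<longrightarrow> e v \<le> \<epsilon>"
  shows "small_at I t (\<lambda>u v. e v * (v - u))"
  unfolding small_at_def
proof (intro allI impI)
  fix \<epsilon> :: real assume "\<epsilon> > 0"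
  then obtain d where "d>0" and d: "\<forall>v\<in>I. \<bar>v - t\<bar> < d \<longrightarrow> e v \<le> \<epsilon>" using assms by blast
  show "\<exists>d>0. \<forall>u v. u \<in> I \<longrightarrow> v \<in> I \<longrightarrow> u \<le> t \<longrightarrow> t \<le> v \<longrightarrow> v - u < d \<longrightarrow> e v * (v - u) \<le> \<epsilon> * (v - u)"
  proof (intro exI[of _ d] conjI allI impI)
    fix u v assume h: "u \<in> I" "v \<in> I" "u \<le> t" "t \<le> v" "v - u < d"
    then have "e v \<le> \<epsilon>" using d by auto
    then show "e v * (v - u) \<le> \<epsilon> * (v - u)" using h by (intro mult_right_mono) auto
  qed (use \<open>d>0\<close> in simp)
qed

lemma powr_tangent:
  fixes x y \<alpha> :: real
  assumes "\<alpha> > 0" "x \<ge> 0" "y \<ge> 0"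
  shows "x powr (1+\<alpha>) - y powr (1+\<alpha>) \<le> (1+\<alpha>) * x powr \<alpha> * (x - y)"
proof (cases "x = 0")
  case True then show ?thesis using assms by simp
next
  case False
  then have xp: "x > 0" using assms by simp
  have xx: "x powr (1+\<alpha>) = x powr \<alpha> * x" using xp by (simp add: powr_add)
  show ?thesis
  proof (cases "y = 0")
    case True
    then show ?thesis using xx xp assms by (simp add: algebra_simps)
  next
    case False
    then have yp: "y > 0" using assms by simp
    have cvx: "convex_on {0<..} (\<lambda>z::real. z powr (1+\<alpha>))" using powr_convex assms by simp
    have der: "((\<lambda>z. z powr (1+\<alpha>)) has_field_derivative ((1+\<alpha>) * x powr \<alpha>)) (at x within {0<..})"
      using xp by (auto intro!: derivative_eq_intros)
    have "y powr (1+\<alpha>) - x powr (1+\<alpha>) \<ge> ((1+\<alpha>) * x powr \<alpha>) * (y - x)"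
      by (rule convex_on_imp_above_tangent[OF cvx _ _ _ der]) (use xp yp in \<open>auto simp: interior_open\<close>)
    then show ?thesis by (simp add: algebra_simps)
  qed
qed

lemma AE_negligible:
  assumes "AE t in lebesgue_on {a..b::real}. P t"
  obtains N where "negligible N" "\<And>t. t \<in> {a..b} \<Longrightarrow> t \<notin> N \<Longrightarrow> P t"
proof -
  obtain N where N: "{x \<in> space (lebesgue_on {a..b}). \<not> P x} \<subseteq> N" "emeasure (lebesgue_on {a..b}) N = 0"
    "N \<in> sets (lebesgue_on {a..b})"
    using AE_E[OF assms] by blast
  then have "N \<in> null_sets (lebesgue_on {a..b})" by (simp add: null_sets_def)
  then have "N \<in> null_sets lebesgue" by (simp add: null_sets_restrict_space)
  then have "negligible N" by (simp add: negligible_iff_null_sets)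
  moreover have "\<And>t. t \<in> {a..b} \<Longrightarrow> t \<notin> N \<Longrightarrow> P t" using N(1) by auto
  ultimately show ?thesis using that by blast
qed



lemma cont_vanish:
  fixes f :: "real \<Rightarrow> real"
  assumes "continuous_on S f" "\<tau> \<in> S" "c \<ge> 0"
  shows "\<And>\<epsilon>. \<epsilon> > 0 \<Longrightarrow> \<exists>d>0. \<forall>v\<in>S. \<bar>v - \<tau>\<bar> < d \<longrightarrow> c * \<bar>f v - f \<tau>\<bar> \<le> \<epsilon>"
proof -
  fix \<epsilon> :: real assume "\<epsilon> > 0"
  then have e: "\<epsilon>/(c+1) > 0" using assms by simp
  obtain d where "d>0" and d: "\<forall>v\<in>S. dist v \<tau> < d \<longrightarrow> dist (f v) (f \<tau>) < \<epsilon>/(c+1)"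
    using assms(1,2) e unfolding continuous_on_iff by blast
  show "\<exists>d>0. \<forall>v\<in>S. \<bar>v - \<tau>\<bar> < d \<longrightarrow> c * \<bar>f v - f \<tau>\<bar> \<le> \<epsilon>"
  proof (intro exI[of _ d] conjI ballI impI)
    fix v assume "v \<in> S" "\<bar>v - \<tau>\<bar> < d"
    then have "\<bar>f v - f \<tau>\<bar> \<le> \<epsilon>/(c+1)" using d by (auto simp: dist_real_def)
    then have "c * \<bar>f v - f \<tau>\<bar> \<le> c * (\<epsilon>/(c+1))" using assms(3) by (rule mult_left_mono)
    also have "\<dots> \<le> \<epsilon>" using assms(3) \<open>\<epsilon>>0\<close> by (simp add: field_simps)
    finally show "c * \<bar>f v - f \<tau>\<bar> \<le> \<epsilon>" .
  qed (use \<open>d>0\<close> in simp)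
qed

lemma part1:
  fixes S :: "(real^'n) set" and lam :: "real^'n"
  assumes finS: "finite S" and Sne: "S \<noteq> {}" and Snn: "\<forall>\<pi>\<in>S. 0 \<le> \<pi>"
    and lamC: "lam \<in> cap_region S"
    and \<alpha>: "\<alpha> > 0" and MW: "MW_fluid_solution \<alpha> S lam T q y s" and t: "t \<in> {0..T}"
  shows "1 \<bullet> q t \<le> real CARD('n) powr (\<alpha> / (1 + \<alpha>)) * (1 \<bullet> q 0)"
proof -
  have fs: "fluid_solution S lam T q y s" using MW unfolding MW_fluid_solution_def by blast
  have AE2: "AE t in lebesgue_on {0..T}. \<forall>\<pi>\<in>S.
        \<pi> \<bullet> vpowr (q t) \<alpha> < Max ((\<lambda>\<rho>. \<rho> \<bullet> vpowr (q t) \<alpha>) ` S) \<longrightarrow>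
        (s \<pi> has_real_derivative 0) (at t within {0..T})"
    using MW unfolding MW_fluid_solution_def by blast
  have q_ac: "abs_cont_on {0..T} q" and y_ac: "abs_cont_on {0..T} y"
    and nn: "\<forall>t\<in>{0..T}. 0 \<le> q t \<and> 0 \<le> y t"
    and s_nn: "\<forall>\<pi>\<in>S. \<forall>t\<in>{0..T}. 0 \<le> s \<pi> t"
    and qeq: "\<forall>t\<in>{0..T}. q t = q 0 + t *\<^sub>R lam - (\<Sum>\<pi>\<in>S. s \<pi> t *\<^sub>R \<pi>) + y t"
    and ssum: "\<forall>t\<in>{0..T}. (\<Sum>\<pi>\<in>S. s \<pi> t) = t"
    and smono: "\<forall>\<pi>\<in>S. mono_on {0..T} (s \<pi>)"
    and ymono: "\<forall>i. mono_on {0..T} (\<lambda>t. y t $ i)"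
    and AE1: "AE t in lebesgue_on {0..T}. \<forall>i. 0 < q t $ i \<longrightarrow>
         ((\<lambda>u. y u $ i) has_real_derivative 0) (at t within {0..T})"
    using fs unfolding fluid_solution_def by blast+
  obtain N1 where negN1: "negligible N1" and N1: "\<And>\<tau>. \<tau> \<in> {0..T} \<Longrightarrow> \<tau> \<notin> N1 \<Longrightarrow> \<forall>i. 0 < q \<tau> $ i \<longrightarrow>
         ((\<lambda>u. y u $ i) has_real_derivative 0) (at \<tau> within {0..T})"
    using AE_negligible[OF AE1] by blast
  obtain N2 where negN2: "negligible N2" and N2: "\<And>\<tau>. \<tau> \<in> {0..T} \<Longrightarrow> \<tau> \<notin> N2 \<Longrightarrow> \<forall>\<pi>\<in>S.
        \<pi> \<bullet> vpowr (q \<tau>) \<alpha> < Max ((\<lambda>\<rho>. \<rho> \<bullet> vpowr (q \<tau>) \<alpha>) ` S) \<longrightarrow>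
        (s \<pi> has_real_derivative 0) (at \<tau> within {0..T})"
    using AE_negligible[OF AE2] by blast
  have qnn: "0 \<le> q \<tau> $ i" if "\<tau> \<in> {0..T}" for \<tau> i
    using nn that by (simp add: less_eq_vec_def)
  have pinn: "0 \<le> \<pi> $ i" if "\<pi> \<in> S" for \<pi> i
    using Snn that by (simp add: less_eq_vec_def)
  obtain \<sigma> where \<sigma>: "\<sigma> \<in> convex hull S" "lam \<le> \<sigma>" and lam0: "0 \<le> lam"
    using lamC unfolding cap_region_def by blast
  have lamnn: "0 \<le> lam $ i" for i using lam0 by (simp add: less_eq_vec_def)
  have sinc: "0 \<le> s \<pi> v - s \<pi> u \<and> s \<pi> v - s \<pi> u \<le> v - u"
    if "\<pi> \<in> S" "0 \<le> u" "u \<le> v" "v \<le> T" for \<pi> u v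
  proof -
    have mono: "s \<rho> u \<le> s \<rho> v" if "\<rho> \<in> S" for \<rho>
      using smono that \<open>0 \<le> u\<close> \<open>u \<le> v\<close> \<open>v \<le> T\<close> by (auto simp: mono_on_def)
    have "(\<Sum>\<rho>\<in>S. s \<rho> v - s \<rho> u) = v - u"
      using ssum \<open>0 \<le> u\<close> \<open>u \<le> v\<close> \<open>v \<le> T\<close> by (simp add: sum_subtractf)
    moreover have "s \<pi> v - s \<pi> u \<le> (\<Sum>\<rho>\<in>S. s \<rho> v - s \<rho> u)"
      using finS that(1) mono by (intro member_le_sum) auto
    ultimately show ?thesis using mono[OF that(1)] by simp
  qed
  have qcomp: "q \<tau> $ i = q 0 $ i + \<tau> * lam $ i - (\<Sum>\<pi>\<in>S. s \<pi> \<tau> * \<pi> $ i) + y \<tau> $ i"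
    if "\<tau> \<in> {0..T}" for \<tau> i
  proof -
    have "q \<tau> $ i = (q 0 + \<tau> *\<^sub>R lam - (\<Sum>\<pi>\<in>S. s \<pi> \<tau> *\<^sub>R \<pi>) + y \<tau>) $ i" using qeq that by metis
    then show ?thesis by simp
  qed
  have dq: "q v $ i - q u $ i = (v - u) * lam $ i - (\<Sum>\<pi>\<in>S. (s \<pi> v - s \<pi> u) * \<pi> $ i) + (y v $ i - y u $ i)"
    if "u \<in> {0..T}" "v \<in> {0..T}" for u v i
    using qcomp[OF that(1), of i] qcomp[OF that(2), of i]
    by (simp add: algebra_simps sum_subtractf)
  have y_ac_i: "abs_cont_on {0..T} (\<lambda>\<tau>. y \<tau> $ i)" for i by (rule abs_cont_component[OF y_ac])
  have q_cont_i: "continuous_on {0..T} (\<lambda>\<tau>. q \<tau> $ i)" for i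
    by (rule abs_cont_imp_continuous_on[OF abs_cont_component[OF q_ac]])
  have yconst: "y d $ i \<le> y c $ i"
    if cd: "0 \<le> c" "c \<le> d" "d \<le> T" and pos: "\<And>\<tau>. c < \<tau> \<Longrightarrow> \<tau> \<le> d \<Longrightarrow> 0 < q \<tau> $ i" for i c d
  proof (rule main_mono[where g="\<lambda>\<tau>. y \<tau> $ i" and a=c and b=d and E = "N1 \<union> {c}"])
    show "c \<le> d" by fact
    show "abs_cont_on {c..d} (\<lambda>\<tau>. y \<tau> $ i)" using cd by (intro abs_cont_subset[OF y_ac_i]) auto
    show "negligible (N1 \<union> {c})" using negN1 by simp
    fix \<tau> assume \<tau>: "\<tau> \<in> {c..d}" "\<tau> \<notin> N1 \<union> {c}"
    then have "0 < q \<tau> $ i" using pos by auto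
    moreover have "\<tau> \<in> {0..T}" using \<tau> cd by auto
    ultimately have "((\<lambda>u. y u $ i) has_real_derivative 0) (at \<tau> within {0..T})"
      using N1 \<tau> by blast
    then have "small_at {0..T} \<tau> (\<lambda>u v. \<bar>y v $ i - y u $ i\<bar>)" by (rule small_at_deriv0)
    then have "small_at {c..d} \<tau> (\<lambda>u v. \<bar>y v $ i - y u $ i\<bar>)" by (rule small_at_subset) (use cd in auto)
    then show "small_at {c..d} \<tau> (\<lambda>u v. y v $ i - y u $ i)" by (rule small_at_mono) simp
  qed
  define C where "C i = (\<Sum>\<pi>\<in>S. \<pi> $ i)" for i
  have Cnn: "0 \<le> C i" for i unfolding C_def using pinn by (simp add: sum_nonneg)
  have sumds: "0 \<le> (\<Sum>\<pi>\<in>S. (s \<pi> v - s \<pi> u) * \<pi> $ i) \<and> (\<Sum>\<pi>\<in>S. (s \<pi> v - s \<pi> u) * \<pi> $ i) \<le> C i * (v - u)"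
    if "0 \<le> u" "u \<le> v" "v \<le> T" for u v i
  proof
    show "0 \<le> (\<Sum>\<pi>\<in>S. (s \<pi> v - s \<pi> u) * \<pi> $ i)"
      using sinc that pinn by (intro sum_nonneg mult_nonneg_nonneg) auto
    have "(\<Sum>\<pi>\<in>S. (s \<pi> v - s \<pi> u) * \<pi> $ i) \<le> (\<Sum>\<pi>\<in>S. (v - u) * \<pi> $ i)"
      using sinc that pinn by (intro sum_mono mult_right_mono) auto
    also have "\<dots> = C i * (v - u)" unfolding C_def by (simp add: sum_distrib_left mult.commute)
    finally show "(\<Sum>\<pi>\<in>S. (s \<pi> v - s \<pi> u) * \<pi> $ i) \<le> C i * (v - u)" .
  qed
  have ylip: "y v $ i - y u $ i \<le> C i * (v - u)" if uv: "0 \<le> u" "u \<le> v" "v \<le> T" for u v i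
  proof -
    define Z where "Z = {r \<in> {u..v}. q r $ i = 0}"
    show ?thesis
    proof (cases "Z = {}")
      case True
      have "y v $ i \<le> y u $ i"
      proof (rule yconst[OF uv])
        fix \<tau> assume "u < \<tau>" "\<tau> \<le> v"
        then have "\<tau> \<notin> Z" "\<tau> \<in> {0..T}" using True uv by auto
        then show "0 < q \<tau> $ i" using qnn[of \<tau> i] \<open>u < \<tau>\<close> \<open>\<tau> \<le> v\<close> unfolding Z_def by force
      qed
      then show ?thesis using Cnn[of i] uv by (smt (verit) mult_nonneg_nonneg)
    next
      case False
      have "{u..v} \<subseteq> {0..T}" using uv by auto
      then have "closed {x \<in> {u..v}. q x $ i = 0}"
        using continuous_closed_preimage_constant[OF continuous_on_subset[OF q_cont_i[of i]]] by blast
      then have "closed Z" unfolding Z_def .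
      moreover have "bdd_above Z" unfolding Z_def by (rule bdd_aboveI[of _ v]) auto
      ultimately have rZ: "Sup Z \<in> Z" using False closed_contains_Sup by blast
      define r where "r = Sup Z"
      have r: "u \<le> r" "r \<le> v" "q r $ i = 0" using rZ unfolding r_def Z_def by auto
      have "y v $ i \<le> y r $ i"
      proof (rule yconst)
        show "0 \<le> r" "r \<le> v" "v \<le> T" using r uv by auto
        fix \<tau> assume "r < \<tau>" "\<tau> \<le> v"
        have "\<tau> \<notin> Z"
        proof
          assume "\<tau> \<in> Z"
          then have "\<tau> \<le> Sup Z" using \<open>bdd_above Z\<close> by (rule cSup_upper)
          then show False using \<open>r < \<tau>\<close> r_def by simp
        qed
        then show "0 < q \<tau> $ i" using qnn[of \<tau> i] \<open>r < \<tau>\<close> \<open>\<tau> \<le> v\<close> r uv unfolding Z_def by force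
      qed
      moreover have "y r $ i - y u $ i \<le> C i * (v - u)"
      proof -
        have "q r $ i - q u $ i = (r - u) * lam $ i - (\<Sum>\<pi>\<in>S. (s \<pi> r - s \<pi> u) * \<pi> $ i) + (y r $ i - y u $ i)"
          using dq[of u r i] r uv by auto
        moreover have "0 \<le> q u $ i" using qnn uv by auto
        moreover have "0 \<le> (r - u) * lam $ i" using r lamnn by simp
        moreover have "(\<Sum>\<pi>\<in>S. (s \<pi> r - s \<pi> u) * \<pi> $ i) \<le> C i * (r - u)" using sumds[of u r i] r uv by auto
        moreover have "C i * (r - u) \<le> C i * (v - u)" using Cnn r by (intro mult_left_mono) auto
        ultimately show ?thesis using r by linarith
      qed
      ultimately show ?thesis by linarith
    qed
  qed
  define K where "K i = lam $ i + 2 * C i" for i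
  have Knn: "0 \<le> K i" for i unfolding K_def using lamnn Cnn by (simp add: add_nonneg_nonneg)
  have qlip: "\<bar>q v $ i - q u $ i\<bar> \<le> K i * (v - u)" if uv: "0 \<le> u" "u \<le> v" "v \<le> T" for u v i
  proof -
    have e: "q v $ i - q u $ i = (v - u) * lam $ i - (\<Sum>\<pi>\<in>S. (s \<pi> v - s \<pi> u) * \<pi> $ i) + (y v $ i - y u $ i)"
      using dq[of u v i] uv by auto
    have y1: "0 \<le> y v $ i - y u $ i" using ymono uv by (auto simp: mono_on_def)
    have y2: "y v $ i - y u $ i \<le> C i * (v - u)" by (rule ylip[OF uv])
    have l1: "0 \<le> (v - u) * lam $ i" using uv lamnn by simp
    have s2: "0 \<le> (\<Sum>\<pi>\<in>S. (s \<pi> v - s \<pi> u) * \<pi> $ i) \<and> (\<Sum>\<pi>\<in>S. (s \<pi> v - s \<pi> u) * \<pi> $ i) \<le> C i * (v - u)"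
      by (rule sumds[OF uv])
    have "K i * (v - u) = (v - u) * lam $ i + 2 * (C i * (v - u))" unfolding K_def by (simp add: algebra_simps)
    moreover have gen: "\<And>A D Y W Q KK::real. Q = A - D + Y \<Longrightarrow> KK = A + 2*W \<Longrightarrow> 0 \<le> A \<Longrightarrow> 0 \<le> D \<Longrightarrow> D \<le> W \<Longrightarrow> 0 \<le> Y \<Longrightarrow> Y \<le> W \<Longrightarrow> \<bar>Q\<bar> \<le> KK"
      by (simp add: abs_le_iff)
    ultimately show ?thesis using e y1 y2 l1 s2 by auto
  qed
  define p where "p = 1 + \<alpha>"
  have p1: "p > 0" "p \<ge> 1" unfolding p_def using \<alpha> by auto
  define g where "g \<tau> = (\<Sum>i\<in>UNIV. q \<tau> $ i powr p)" for \<tau>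
  define B where "B i = q 0 $ i + K i * T" for i
  have qB: "q \<tau> $ i \<le> B i" if "\<tau> \<in> {0..T}" for \<tau> i
  proof -
    have "\<bar>q \<tau> $ i - q 0 $ i\<bar> \<le> K i * (\<tau> - 0)" using qlip[of 0 \<tau> i] that by auto
    moreover have "K i * \<tau> \<le> K i * T" using that Knn by (intro mult_left_mono) auto
    ultimately show ?thesis unfolding B_def by (simp add: abs_le_iff)
  qed
  have flip: "\<bar>a powr p - b powr p\<bar> \<le> p * B i powr \<alpha> * \<bar>a - b\<bar>"
    if ab: "0 \<le> a" "a \<le> B i" "0 \<le> b" "b \<le> B i" for a b i
  proof -
    have t1: "a powr p - b powr p \<le> p * a powr \<alpha> * (a - b)"
      using powr_tangent[OF \<alpha> ab(1) ab(3)] unfolding p_def .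
    have t2: "b powr p - a powr p \<le> p * b powr \<alpha> * (b - a)"
      using powr_tangent[OF \<alpha> ab(3) ab(1)] unfolding p_def .
    have pa: "p * a powr \<alpha> \<le> p * B i powr \<alpha>" using ab p1 \<alpha> by (intro mult_left_mono powr_mono2) auto
    have pb: "p * b powr \<alpha> \<le> p * B i powr \<alpha>" using ab p1 \<alpha> by (intro mult_left_mono powr_mono2) auto
    have nn: "0 \<le> p * a powr \<alpha>" "0 \<le> p * b powr \<alpha>" using p1 by auto
    show ?thesis
    proof (cases "b \<le> a")
      case True
      have "p * a powr \<alpha> * (a - b) \<le> p * B i powr \<alpha> * (a - b)" using pa True by (intro mult_right_mono) auto
      moreover have "p * b powr \<alpha> * (b - a) \<le> 0" using nn True by (simp add: mult_nonneg_nonpos)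
      ultimately show ?thesis using t1 t2 True by (simp add: abs_le_iff)
    next
      case False
      have "p * b powr \<alpha> * (b - a) \<le> p * B i powr \<alpha> * (b - a)" using pb False by (intro mult_right_mono) auto
      moreover have "p * a powr \<alpha> * (a - b) \<le> 0" using nn False by (simp add: mult_nonneg_nonpos)
      ultimately show ?thesis using t1 t2 False by (simp add: abs_le_iff)
    qed
  qed
  define L where "L = (\<Sum>i\<in>UNIV. p * B i powr \<alpha> * K i)"
  have glip1: "\<bar>g v - g u\<bar> \<le> L * (v - u)" if uv: "0 \<le> u" "u \<le> v" "v \<le> T" for u v
  proof -
    have "\<bar>g v - g u\<bar> = \<bar>\<Sum>i\<in>UNIV. q v $ i powr p - q u $ i powr p\<bar>" unfolding g_def by (simp add: sum_subtractf)
    also have "\<dots> \<le> (\<Sum>i\<in>UNIV. \<bar>q v $ i powr p - q u $ i powr p\<bar>)" by (rule sum_abs)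
    also have "\<dots> \<le> (\<Sum>i\<in>UNIV. p * B i powr \<alpha> * K i * (v - u))"
    proof (rule sum_mono)
      fix i
      have "\<bar>q v $ i powr p - q u $ i powr p\<bar> \<le> p * B i powr \<alpha> * \<bar>q v $ i - q u $ i\<bar>"
        using uv by (intro flip qnn qB) auto
      also have "\<dots> \<le> p * B i powr \<alpha> * (K i * (v - u))"
        using qlip[OF uv] p1 by (intro mult_left_mono) auto
      finally show "\<bar>q v $ i powr p - q u $ i powr p\<bar> \<le> p * B i powr \<alpha> * K i * (v - u)" by (simp add: mult.assoc)
    qed
    also have "\<dots> = L * (v - u)" unfolding L_def by (simp add: sum_distrib_right)
    finally show ?thesis .
  qed
  have glip: "norm (g v - g u) \<le> L * \<bar>v - u\<bar>" if "u \<in> {0..t}" "v \<in> {0..t}" for u v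
  proof (cases "u \<le> v")
    case True then show ?thesis using glip1[of u v] that t by auto
  next
    case False then show ?thesis using glip1[of v u] that t by (auto simp: abs_minus_commute)
  qed
  have g_ac: "abs_cont_on {0..t} g" by (rule lipschitz_abs_cont[OF glip])
  have dini: "small_at {0..T} \<tau> (\<lambda>u v. g v - g u)" if \<tau>: "\<tau> \<in> {0..T}" "\<tau> \<notin> N1 \<union> N2" for \<tau>
  proof -
    have \<tau>T: "\<tau> \<in> {0..T}" using \<tau> by simp
    define P where "P = vpowr (q \<tau>) \<alpha>"
    have Pi: "P $ i = q \<tau> $ i powr \<alpha>" for i unfolding P_def by (simp add: vpowr_def)
    have Pnn: "0 \<le> P $ i" for i using Pi by simp
    define M where "M = Max ((\<lambda>\<rho>. \<rho> \<bullet> P) ` S)"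
    have Mge: "\<pi> \<bullet> P \<le> M" if "\<pi> \<in> S" for \<pi> unfolding M_def using finS that by (intro Max_ge) auto
    have ipnn: "0 \<le> \<pi> \<bullet> P" if "\<pi> \<in> S" for \<pi>
      using pinn[OF that] Pnn by (simp add: inner_vec_def sum_nonneg)
    obtain \<pi>0 where "\<pi>0 \<in> S" using Sne by blast
    have M0: "0 \<le> M" using ipnn[OF \<open>\<pi>0 \<in> S\<close>] Mge[OF \<open>\<pi>0 \<in> S\<close>] by simp
    have lamM: "lam \<bullet> P \<le> M"
    proof -
      have "lam \<bullet> P \<le> \<sigma> \<bullet> P"
        unfolding inner_vec_def using \<sigma>(2) Pnn by (intro sum_mono) (auto simp: less_eq_vec_def intro: mult_right_mono)
      moreover have "convex hull S \<subseteq> {x. P \<bullet> x \<le> M}"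
      proof (rule hull_minimal)
        show "S \<subseteq> {x. P \<bullet> x \<le> M}" using Mge by (auto simp: inner_commute)
        show "convex {x. P \<bullet> x \<le> M}" by (rule convex_halfspace_le)
      qed
      then have "\<sigma> \<bullet> P \<le> M" using \<sigma>(1) by (auto simp: inner_commute)
      ultimately show ?thesis by simp
    qed
    have sder: "(s \<pi> has_real_derivative 0) (at \<tau> within {0..T})" if "\<pi> \<in> S" "\<pi> \<bullet> P < M" for \<pi>
      using N2[OF \<tau>T] \<tau> that unfolding P_def M_def by blast
    have yder: "((\<lambda>u. y u $ i) has_real_derivative 0) (at \<tau> within {0..T})" if "0 < q \<tau> $ i" for i
      using N1[OF \<tau>T] \<tau> that by blast
    have small_if: "small_at {0..T} \<tau> (\<lambda>u v. if c then h u v else 0)" if "c \<Longrightarrow> small_at {0..T} \<tau> h" for c h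
      using that by (cases c) (simp_all add: small_at_zero)
    define h1 where "h1 u v = (\<Sum>\<pi>\<in>S. if \<pi> \<bullet> P < M then \<bar>s \<pi> v - s \<pi> u\<bar> else 0)" for u v
    define h2 where "h2 u v = (\<Sum>i\<in>UNIV. if 0 < q \<tau> $ i then P $ i * \<bar>y v $ i - y u $ i\<bar> else 0)" for u v
    define h3 where "h3 u v = (\<Sum>i\<in>UNIV. p * K i * \<bar>q v $ i powr \<alpha> - P $ i\<bar> * (v - u))" for u v
    have sm1: "small_at {0..T} \<tau> h1"
      unfolding h1_def using finS
      by (intro small_at_sum small_if) (auto intro: small_at_deriv0 sder)
    have sm2: "small_at {0..T} \<tau> h2"
      unfolding h2_def
      by (intro small_at_sum small_if small_at_scale[OF Pnn] small_at_deriv0 yder) auto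
    have sm3: "small_at {0..T} \<tau> h3"
      unfolding h3_def
    proof (intro small_at_sum small_at_vanish)
      fix i :: 'n and \<epsilon> :: real assume "\<epsilon> > 0"
      have cont: "continuous_on {0..T} (\<lambda>v. q v $ i powr \<alpha>)"
        using q_cont_i[of i] qnn \<alpha> by (intro continuous_on_powr') (auto intro: continuous_on_const)
      have "p * K i \<ge> 0" using p1 Knn by simp
      from cont_vanish[OF cont \<tau>T this \<open>\<epsilon>>0\<close>]
      show "\<exists>d>0. \<forall>v\<in>{0..T}. \<bar>v - \<tau>\<bar> < d \<longrightarrow> p * K i * \<bar>q v $ i powr \<alpha> - P $ i\<bar> \<le> \<epsilon>"
        by (simp add: Pi)
    qed simp
    have sm: "small_at {0..T} \<tau> (\<lambda>u v. p * M * h1 u v + p * h2 u v + h3 u v)"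
      using p1 M0 by (intro small_at_add small_at_scale sm1 sm2 sm3) auto
    show ?thesis
    proof (rule small_at_mono[OF sm])
      fix u v assume uv: "u \<in> {0..T}" "v \<in> {0..T}" "u \<le> \<tau>" "\<tau> \<le> v"
      then have uv': "0 \<le> u" "u \<le> v" "v \<le> T" by auto
      define dq where "dq i = q v $ i - q u $ i" for i
      have a: "g v - g u \<le> (\<Sum>i\<in>UNIV. p * q v $ i powr \<alpha> * dq i)"
      proof -
        have "g v - g u = (\<Sum>i\<in>UNIV. q v $ i powr p - q u $ i powr p)" unfolding g_def by (simp add: sum_subtractf)
        also have "\<dots> \<le> (\<Sum>i\<in>UNIV. p * q v $ i powr \<alpha> * dq i)"
          unfolding dq_def p_def using uv by (intro sum_mono powr_tangent[OF \<alpha>] qnn) auto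
        finally show ?thesis .
      qed
      have b: "(\<Sum>i\<in>UNIV. p * q v $ i powr \<alpha> * dq i) = p * (\<Sum>i\<in>UNIV. P $ i * dq i) + (\<Sum>i\<in>UNIV. p * (q v $ i powr \<alpha> - P $ i) * dq i)"
        by (simp add: sum_distrib_left sum.distrib[symmetric] algebra_simps)
      have c: "(\<Sum>i\<in>UNIV. p * (q v $ i powr \<alpha> - P $ i) * dq i) \<le> h3 u v"
        unfolding h3_def
      proof (rule sum_mono)
        fix i
        have "p * (q v $ i powr \<alpha> - P $ i) * dq i \<le> \<bar>p * (q v $ i powr \<alpha> - P $ i) * dq i\<bar>" by simp
        also have "\<dots> = p * \<bar>q v $ i powr \<alpha> - P $ i\<bar> * \<bar>dq i\<bar>" using p1 by (simp add: abs_mult)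
        also have "\<dots> \<le> p * \<bar>q v $ i powr \<alpha> - P $ i\<bar> * (K i * (v - u))"
          unfolding dq_def using qlip[OF uv'] p1 by (intro mult_left_mono) auto
        finally show "p * (q v $ i powr \<alpha> - P $ i) * dq i \<le> p * K i * \<bar>q v $ i powr \<alpha> - P $ i\<bar> * (v - u)"
          by (simp add: algebra_simps)
      qed
      have d: "(\<Sum>i\<in>UNIV. P $ i * dq i) \<le> M * h1 u v + h2 u v"
      proof -
        define ds where "ds \<pi> = s \<pi> v - s \<pi> u" for \<pi>
        define dy where "dy i = y v $ i - y u $ i" for i
        have dsnn: "0 \<le> ds \<pi>" if "\<pi> \<in> S" for \<pi> using sinc[OF that uv'] unfolding ds_def by simp
        have dssum: "(\<Sum>\<pi>\<in>S. ds \<pi>) = v - u" unfolding ds_def using ssum uv by (simp add: sum_subtractf)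
        have e1: "(\<Sum>i\<in>UNIV. P $ i * dq i) = (v - u) * (lam \<bullet> P) - (\<Sum>\<pi>\<in>S. ds \<pi> * (\<pi> \<bullet> P)) + (\<Sum>i\<in>UNIV. P $ i * dy i)"
        proof -
          have "(\<Sum>i\<in>UNIV. P $ i * dq i) = (\<Sum>i\<in>UNIV. P $ i * ((v - u) * lam $ i - (\<Sum>\<pi>\<in>S. ds \<pi> * \<pi> $ i) + dy i))"
            unfolding dq_def ds_def dy_def using dq uv by simp
          also have "\<dots> = (v - u) * (\<Sum>i\<in>UNIV. lam $ i * P $ i) - (\<Sum>i\<in>UNIV. \<Sum>\<pi>\<in>S. ds \<pi> * (\<pi> $ i * P $ i)) + (\<Sum>i\<in>UNIV. P $ i * dy i)"
            by (simp add: algebra_simps sum.distrib sum_subtractf sum_distrib_left)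
          also have "(\<Sum>i\<in>UNIV. \<Sum>\<pi>\<in>S. ds \<pi> * (\<pi> $ i * P $ i)) = (\<Sum>\<pi>\<in>S. ds \<pi> * (\<pi> \<bullet> P))"
            by (subst sum.swap) (simp add: inner_vec_def sum_distrib_left)
          finally show ?thesis by (simp add: inner_vec_def)
        qed
        have e2: "(\<Sum>\<pi>\<in>S. ds \<pi> * (\<pi> \<bullet> P)) \<ge> (v - u) * M - M * h1 u v"
        proof -
          have "(\<Sum>\<pi>\<in>S. ds \<pi> * M - M * (if \<pi> \<bullet> P < M then \<bar>s \<pi> v - s \<pi> u\<bar> else 0)) \<le> (\<Sum>\<pi>\<in>S. ds \<pi> * (\<pi> \<bullet> P))"
          proof (rule sum_mono)
            fix \<pi> assume "\<pi> \<in> S"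
            show "ds \<pi> * M - M * (if \<pi> \<bullet> P < M then \<bar>s \<pi> v - s \<pi> u\<bar> else 0) \<le> ds \<pi> * (\<pi> \<bullet> P)"
            proof (cases "\<pi> \<bullet> P < M")
              case True
              then show ?thesis using dsnn[OF \<open>\<pi> \<in> S\<close>] ipnn[OF \<open>\<pi> \<in> S\<close>] unfolding ds_def
                by (simp add: algebra_simps mult_left_mono)
            next
              case False
              then have "\<pi> \<bullet> P = M" using Mge[OF \<open>\<pi> \<in> S\<close>] by simp
              then show ?thesis using False by simp
            qed
          qed
          also have "(\<Sum>\<pi>\<in>S. ds \<pi> * M - M * (if \<pi> \<bullet> P < M then \<bar>s \<pi> v - s \<pi> u\<bar> else 0)) = (v - u) * M - M * h1 u v"
            unfolding h1_def using dssum by (simp add: sum_subtractf sum_distrib_left sum_distrib_right[symmetric])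
          finally show ?thesis .
        qed
        have e3: "(\<Sum>i\<in>UNIV. P $ i * dy i) \<le> h2 u v"
          unfolding h2_def
        proof (rule sum_mono)
          fix i
          show "P $ i * dy i \<le> (if 0 < q \<tau> $ i then P $ i * \<bar>y v $ i - y u $ i\<bar> else 0)"
          proof (cases "0 < q \<tau> $ i")
            case True then show ?thesis unfolding dy_def using Pnn[of i] by (simp add: mult_left_mono)
          next
            case False
            then have "q \<tau> $ i = 0" using qnn[OF \<tau>T, of i] by simp
            then have "P $ i = 0" using Pi by simp
            then show ?thesis by simp
          qed
        qed
        have e4: "(v - u) * (lam \<bullet> P) \<le> (v - u) * M" using lamM uv' by (intro mult_left_mono) auto
        show ?thesis using e1 e2 e3 e4 by (simp add: algebra_simps)
      qed
      have "g v - g u \<le> p * (M * h1 u v + h2 u v) + h3 u v"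
        using a b c d p1 by (smt (verit) mult_left_mono)
      then show "g v - g u \<le> p * M * h1 u v + p * h2 u v + h3 u v" by (simp add: algebra_simps)
    qed
  qed
  have "g t \<le> g 0"
  proof (rule main_mono[where g=g and a=0 and b=t and E="N1 \<union> N2"])
    show "0 \<le> t" using t by simp
    show "abs_cont_on {0..t} g" by (rule g_ac)
    show "negligible (N1 \<union> N2)" using negN1 negN2 by simp
    fix \<tau> assume "\<tau> \<in> {0..t}" "\<tau> \<notin> N1 \<union> N2"
    then have "small_at {0..T} \<tau> (\<lambda>u v. g v - g u)" using dini t by auto
    then show "small_at {0..t} \<tau> (\<lambda>u v. g v - g u)" by (rule small_at_subset) (use t in auto)
  qed
  then have gt: "(\<Sum>i\<in>UNIV. q t $ i powr p) \<le> (\<Sum>i\<in>UNIV. q 0 $ i powr p)" unfolding g_def .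
  define n where "n = real CARD('n)"
  have n1: "n \<ge> 1" unfolding n_def by simp
  define X where "X = (\<Sum>i\<in>UNIV. q t $ i)"
  define A where "A = (\<Sum>i\<in>UNIV. q 0 $ i)"
  have xnn: "\<And>i. 0 \<le> q t $ i" and ann: "\<And>i. 0 \<le> q 0 $ i" using qnn t by auto
  have X0: "0 \<le> X" unfolding X_def using xnn by (simp add: sum_nonneg)
  have A0: "0 \<le> A" unfolding A_def using ann by (simp add: sum_nonneg)
  define m where "m = X / n"
  have m0: "0 \<le> m" unfolding m_def using X0 n1 by simp
  have Xm: "X = n * m" unfolding m_def using n1 by simp
  have step1: "n * m powr p \<le> (\<Sum>i\<in>UNIV. q t $ i powr p)"
  proof -
    have "(\<Sum>i\<in>UNIV. m powr p - q t $ i powr p) \<le> (\<Sum>i\<in>UNIV. p * m powr \<alpha> * (m - q t $ i))"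
      using powr_tangent[OF \<alpha> m0 xnn] unfolding p_def by (intro sum_mono) auto
    also have "\<dots> = p * m powr \<alpha> * (n * m - X)"
      unfolding X_def n_def by (simp add: sum_distrib_left sum_subtractf algebra_simps)
    also have "\<dots> = 0" using Xm by simp
    finally show ?thesis unfolding n_def by (simp add: sum_subtractf)
  qed
  have step2: "(\<Sum>i\<in>UNIV. q 0 $ i powr p) \<le> A powr p"
  proof -
    have "(\<Sum>i\<in>UNIV. q 0 $ i powr p) \<le> (\<Sum>i\<in>UNIV. q 0 $ i * A powr \<alpha>)"
    proof (rule sum_mono)
      fix i
      have "q 0 $ i \<le> A" unfolding A_def using ann by (intro member_le_sum) auto
      then have "q 0 $ i powr \<alpha> \<le> A powr \<alpha>" using ann \<alpha> by (intro powr_mono2) auto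
      then have "q 0 $ i * q 0 $ i powr \<alpha> \<le> q 0 $ i * A powr \<alpha>" using ann by (intro mult_left_mono) auto
      moreover have "q 0 $ i powr p = q 0 $ i * q 0 $ i powr \<alpha>"
        unfolding p_def using ann[of i] by (simp add: powr_add)
      ultimately show "q 0 $ i powr p \<le> q 0 $ i * A powr \<alpha>" by simp
    qed
    also have "\<dots> = A * A powr \<alpha>" unfolding A_def by (simp add: sum_distrib_right)
    also have "\<dots> = A powr p" unfolding p_def using A0 by (simp add: powr_add)
    finally show ?thesis .
  qed
  have mp: "m powr p \<le> A powr p / n"
    using step1 gt step2 n1 by (simp add: field_simps)
  have "m = (m powr p) powr (1/p)" using m0 p1 by (simp add: powr_powr)
  also have "\<dots> \<le> (A powr p / n) powr (1/p)" using mp p1 by (intro powr_mono2) auto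
  also have "\<dots> = A / n powr (1/p)" using A0 n1 p1 by (simp add: powr_divide powr_powr)
  finally have "m \<le> A / n powr (1/p)" .
  then have "n * m \<le> n * (A / n powr (1/p))" using n1 by (intro mult_left_mono) auto
  then have "X \<le> n * (A / n powr (1/p))" using Xm by simp
  also have "\<dots> = n powr (1 - 1/p) * A" using n1 by (simp add: powr_diff)
  also have "1 - 1/p = \<alpha> / (1 + \<alpha>)" unfolding p_def using \<alpha> by (simp add: field_simps)
  finally have "X \<le> n powr (\<alpha> / (1 + \<alpha>)) * A" .
  then show ?thesis unfolding X_def A_def n_def by (simp add: inner_vec_def)
qed



lemma part2:
  fixes S :: "(real^'n) set" and lam :: "real^'n"
  assumes finS: "finite S" and Sne: "S \<noteq> {}" and Snn: "\<forall>\<pi>\<in>S. 0 \<le> \<pi>"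
    and cl: "complete_loading S lam" and fs: "fluid_solution S lam T q y s" and t: "t \<in> {0..T}"
  shows "1 \<bullet> q t \<ge> 1 \<bullet> q 0"
proof -
  have nn: "\<forall>t\<in>{0..T}. 0 \<le> q t \<and> 0 \<le> y t"
    and s_nn: "\<forall>\<pi>\<in>S. \<forall>t\<in>{0..T}. 0 \<le> s \<pi> t"
    and qeq: "\<forall>t\<in>{0..T}. q t = q 0 + t *\<^sub>R lam - (\<Sum>\<pi>\<in>S. s \<pi> t *\<^sub>R \<pi>) + y t"
    and ssum: "\<forall>t\<in>{0..T}. (\<Sum>\<pi>\<in>S. s \<pi> t) = t"
    using fs unfolding fluid_solution_def by blast+
  have lamC: "lam \<in> cap_region S" and hull: "(1 / Max ((\<lambda>\<pi>. 1 \<bullet> \<pi>) ` S)) *\<^sub>R (1::real^'n) \<in> convex hull (Xi S lam)"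
    using cl unfolding complete_loading_def by blast+
  have lam0: "0 \<le> lam" using lamC unfolding cap_region_def by blast
  have t0: "0 \<le> t" using t by simp
  have qt: "q t = q 0 + t *\<^sub>R lam - (\<Sum>\<pi>\<in>S. s \<pi> t *\<^sub>R \<pi>) + y t" using qeq t by blast
  have y0: "0 \<le> y t" using nn t by blast
  have innn: "0 \<le> a \<bullet> b" if "0 \<le> a" "0 \<le> (b::real^'n)" for a b
    using that by (auto simp: inner_vec_def less_eq_vec_def intro!: sum_nonneg)
  have key: "\<xi> \<bullet> q t - \<xi> \<bullet> q 0 = t * (\<xi> \<bullet> lam) - (\<Sum>\<pi>\<in>S. s \<pi> t * (\<xi> \<bullet> \<pi>)) + \<xi> \<bullet> y t" for \<xi>
    unfolding qt by (simp add: inner_add_right inner_diff_right inner_sum_right)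
  define Mx where "Mx = Max ((\<lambda>\<pi>. 1 \<bullet> \<pi>) ` S)"
  have Mxge: "1 \<bullet> \<pi> \<le> Mx" if "\<pi> \<in> S" for \<pi> unfolding Mx_def using finS that by (intro Max_ge) auto
  show ?thesis
  proof (cases "Mx = 0")
    case True
    have z: "1 \<bullet> \<pi> = 0" if "\<pi> \<in> S" for \<pi>
      using Mxge[OF that] innn[of 1 \<pi>] Snn that True by (simp add: less_eq_vec_def)
    have "1 \<bullet> q t - 1 \<bullet> q 0 = t * (1 \<bullet> lam) + 1 \<bullet> y t" using key[of 1] z by simp
    moreover have "0 \<le> t * (1 \<bullet> lam)" using t0 innn[of 1 lam] lam0 by (simp add: less_eq_vec_def)
    moreover have "0 \<le> 1 \<bullet> y t" using innn[of 1 "y t"] y0 by (simp add: less_eq_vec_def)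
    ultimately show ?thesis by simp
  next
    case False
    obtain \<pi>0 where "\<pi>0 \<in> S" using Sne by blast
    have one0: "0 \<le> (1::real^'n)" by (simp add: less_eq_vec_def)
    have Mx0: "0 \<le> Mx" using Mxge[OF \<open>\<pi>0 \<in> S\<close>] innn[OF one0, of \<pi>0] Snn \<open>\<pi>0 \<in> S\<close> by simp
    then have Mxp: "0 < Mx" using False by simp
    have Xi_sub: "Xi S lam \<subseteq> {z. (q t - q 0) \<bullet> z \<ge> 0}"
    proof
      fix \<xi> assume "\<xi> \<in> Xi S lam"
      then have \<xi>: "\<xi> \<in> dual_region S" "\<xi> \<bullet> lam = 1"
        unfolding Xi_def S_star_def Ext_def by (auto dest: extreme_point_of_stillconvex simp: extreme_point_of_def)
      have \<xi>0: "0 \<le> \<xi>" and \<xi>max: "Max ((\<lambda>\<pi>. \<xi> \<bullet> \<pi>) ` S) \<le> 1" using \<xi>(1) unfolding dual_region_def by auto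
      have \<xi>le: "\<xi> \<bullet> \<pi> \<le> 1" if "\<pi> \<in> S" for \<pi>
        using \<xi>max finS that by (meson Max_ge finite_imageI image_eqI order_trans)
      have "(\<Sum>\<pi>\<in>S. s \<pi> t * (\<xi> \<bullet> \<pi>)) \<le> (\<Sum>\<pi>\<in>S. s \<pi> t)"
        using s_nn t \<xi>le by (intro sum_mono) (simp add: mult_left_le)
      moreover have "0 \<le> \<xi> \<bullet> y t" using innn[OF \<xi>0 y0] .
      ultimately have "\<xi> \<bullet> q t - \<xi> \<bullet> q 0 \<ge> 0" using key[of \<xi>] \<xi>(2) ssum t by simp
      then show "\<xi> \<in> {z. (q t - q 0) \<bullet> z \<ge> 0}" by (simp add: inner_diff_right inner_commute)
    qed
    have "convex hull (Xi S lam) \<subseteq> {z. (q t - q 0) \<bullet> z \<ge> 0}"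
      by (rule hull_minimal[OF Xi_sub]) (rule convex_halfspace_ge)
    with hull have "(q t - q 0) \<bullet> ((1 / Mx) *\<^sub>R (1::real^'n)) \<ge> 0" unfolding Mx_def by blast
    then have "(1 / Mx) * (1 \<bullet> q t - 1 \<bullet> q 0) \<ge> 0" by (simp add: inner_diff_left inner_diff_right inner_commute)
    then show ?thesis using Mxp by (simp add: zero_le_divide_iff)
  qed
qed


theorem theorem8p2:
  fixes S :: "(real^'n) set" and lam :: "real^'n"
  assumes "finite S" and "S \<noteq> {}" and "\<forall>\<pi>\<in>S. 0 \<le> \<pi>"
    and "lam \<in> cap_region S"
  shows "(\<forall>\<alpha>>0. \<forall>T q y s. MW_fluid_solution \<alpha> S lam T q y s \<longrightarrow>
            (\<forall>t\<in>{0..T}. 1 \<bullet> q t \<le> real CARD('n) powr (\<alpha> / (1 + \<alpha>)) * (1 \<bullet> q 0)))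
       \<and> (complete_loading S lam \<longrightarrow>
            (\<forall>T q y s. fluid_solution S lam T q y s \<longrightarrow>
               (\<forall>t\<in>{0..T}. 1 \<bullet> q t \<ge> 1 \<bullet> q 0)))"
  using part1[OF assms] part2[OF assms(1-3)] by blast

end
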